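(* Let $n>1$ and let $a_0,\dots,a_{n-1},c_0,\dots,c_{n-1}\in\mathbb Z/(n)$ with $a_i=a_{-i}$ and $c_i=c_{-i}$ for all $i\in\mathbb Z/(n)$. If there exists an invertible $a\in\mathbb Z/(n)$ such that $a\,a_i=c_{ai}$ for all $i\in\mathbb Z/(n)$, then the solutions $(X,r_{a_0,\dots,a_{n-1}})$ and $(X,r_{c_0,\dots,c_{n-1}})$ are isomorphic. Conversely, if the bilinear forms $b_{a_0,\dots,a_{n-1}}$ and $b_{c_0,\dots,c_{n-1}}$ are both non-singular and these two solutions are isomorphic, then there exists an invertible $a\in\mathbb Z/(n)$ with $a\,a_i=c_{ai}$ for all $i$.
   Context: Let $n>1$, $X=\{x_{ij}: i,j\in\mathbb Z/(n)\}$ (a set of $n^2$ elements indexed by $(\mathbb Z/(n))^2$). For $j_0,\dots,j_{n-1}\in\mathbb Z/(n)$ with $j_i=j_{-i}$, let $r_{j_0,\dots,j_{n-1}}(x,y)=(\lambda_x(y),\lambda^{-1}_{\lambda_x(y)}(x))$, where $\lambda_{x_{ij}}(x_{kl})=x_{k+j,\ l-j_{k+j-i}}$; this is a solution of the YBE (it is the restriction to $x_{ij}=(e_i,j)$ of the solution associated to the left brace $(\mathbb Z/(n))^n\times\mathbb Z/(n)$ with $(u,i)\circ(v,j)=(u+\alpha(i)(v),i+j)$, $(u,i)+(v,j)=(u+v,i+j+b(u,v))$, $\alpha(i)(e_k)=e_{i+k}$). Here $b_{j_0,\dots,j_{n-1}}$ is the bilinear form on $(\mathbb Z/(n))^n$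 with $b(e_k,e_l)=j_{l-k}$ for the standard basis $(e_k)_{k\in\mathbb Z/(n)}$; it is non-singular if $b(u,v)=0$ for all $v$ implies $u=0$. An isomorphism of solutions $f:(X,r)\to(X,s)$ (with $r(x,y)=(\sigma_x(y),\cdot)$, $s(x,y)=(\sigma'_x(y),\cdot)$) is a bijection with $f(\sigma_x(y))=\sigma'_{f(x)}(f(y))$ for all $x,y$. *)

theory Defs
  imports Main
begin

text \<open>Z/(n) is represented by the natural numbers 0..n-1 with arithmetic mod n.
 The element x_{ij} of X is the pair (i,j).  A parameter sequence j_0..j_{n-1}
 is a function s :: nat => nat, only its values on 0..n-1 matter.\<close>

definition Xset :: "nat \<Rightarrow> (nat \<times> nat) set" where
  "Xset n = {0..<n} \<times> {0..<n}"

definition zn_seq :: "nat \<Rightarrow> (nat \<Rightarrow> nat) \<Rightarrow> bool" where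
  "zn_seq n s \<longleftrightarrow> (\<forall>i<n. s i < n)"

definition sym_seq :: "nat \<Rightarrow> (nat \<Rightarrow> nat) \<Rightarrow> bool" where
  "sym_seq n s \<longleftrightarrow> (\<forall>i<n. s i = s ((n - i) mod n))"

text \<open>lambda_{x_{ij}}(x_{kl}) = x_{k+j, l - s_{k+j-i}}\<close>
definition lam :: "nat \<Rightarrow> (nat \<Rightarrow> nat) \<Rightarrow> nat \<times> nat \<Rightarrow> nat \<times> nat \<Rightarrow> nat \<times> nat" where
  "lam n s x y = (case x of (i, j) \<Rightarrow> case y of (k, l) \<Rightarrow>
     ((k + j) mod n, (l + n - s ((k + j + n - i) mod n)) mod n))"

text \<open>The solution r_s(x,y) = (lambda_x(y), lambda^{-1}_{lambda_x(y)}(x)); isomorphism of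
 solutions as in the paper: a bijection f of X with f(lambda_x y) = lambda'_{f x}(f y).\<close>
definition sol_iso :: "nat \<Rightarrow> (nat \<Rightarrow> nat) \<Rightarrow> (nat \<Rightarrow> nat) \<Rightarrow> bool" where
  "sol_iso n s t \<longleftrightarrow> (\<exists>f. bij_betw f (Xset n) (Xset n) \<and>
     (\<forall>x\<in>Xset n. \<forall>y\<in>Xset n. f (lam n s x y) = lam n t (f x) (f y)))"

text \<open>Vectors of (Z/(n))^n: functions u with u k < n for k < n (values at k >= n irrelevant).\<close>
definition znvec :: "nat \<Rightarrow> (nat \<Rightarrow> nat) \<Rightarrow> bool" where
  "znvec n u \<longleftrightarrow> (\<forall>k<n. u k < n)"

definition bform :: "nat \<Rightarrow> (nat \<Rightarrow> nat) \<Rightarrow> (nat \<Rightarrow> nat) \<Rightarrow> (nat \<Rightarrow> nat) \<Rightarrow> nat" where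
  "bform n s u v = (\<Sum>k<n. \<Sum>l<n. u k * v l * s ((l + n - k) mod n)) mod n"

definition nonsingular :: "nat \<Rightarrow> (nat \<Rightarrow> nat) \<Rightarrow> bool" where
  "nonsingular n s \<longleftrightarrow> (\<forall>u. znvec n u \<longrightarrow> (\<forall>v. znvec n v \<longrightarrow> bform n s u v = 0) \<longrightarrow> (\<forall>k<n. u k = 0))"

definition zn_unit :: "nat \<Rightarrow> nat \<Rightarrow> bool" where
  "zn_unit n a \<longleftrightarrow> a < n \<and> (\<exists>b<n. (a * b) mod n = 1)"

definition scaled :: "nat \<Rightarrow> nat \<Rightarrow> (nat \<Rightarrow> nat) \<Rightarrow> (nat \<Rightarrow> nat) \<Rightarrow> bool" where
  "scaled n a s t \<longleftrightarrow> (\<forall>i<n. (a * s i) mod n = t ((a * i) mod n))"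

end

theory Submission
  imports Defs "HOL-Library.FuncSet"
begin


lemma lam_int:
  assumes n: "n > 0" and s: "zn_seq n s" and "i < n" "j < n" "k < n" "l < n"
  shows "int (fst (lam n s (i,j) (k,l))) = (int k + int j) mod int n"
    and "int (snd (lam n s (i,j) (k,l))) =
         (int l - int (s (nat ((int k + int j - int i) mod int n)))) mod int n"
proof -
  show "int (fst (lam n s (i,j) (k,l))) = (int k + int j) mod int n"
    by (simp add: lam_def zmod_int)
  have e: "(k + j + n - i) mod n = nat ((int k + int j - int i) mod int n)"
  proof -
    have "int ((k + j + n - i) mod n) = (int k + int j + int n - int i) mod int n"
      using \<open>i < n\<close> by (simp add: zmod_int of_nat_diff)
    also have "\<dots> = (int k + int j - int i) mod int n"
      by (metis add_diff_eq diff_add_eq mod_add_self2)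
    finally show ?thesis by linarith
  qed
  have lt: "s ((k + j + n - i) mod n) < n" using s n unfolding zn_seq_def by simp
  have "int (snd (lam n s (i,j) (k,l))) = (int l + int n - int (s ((k + j + n - i) mod n))) mod int n"
    using lt by (simp add: lam_def zmod_int of_nat_diff)
  also have "\<dots> = (int l - int (s ((k + j + n - i) mod n))) mod int n"
    by (metis add_diff_eq diff_add_eq mod_add_self2)
  finally show "int (snd (lam n s (i,j) (k,l))) =
         (int l - int (s (nat ((int k + int j - int i) mod int n)))) mod int n"
    using e by simp
qed


definition SI :: "nat \<Rightarrow> (nat \<Rightarrow> nat) \<Rightarrow> int \<Rightarrow> int" where
  "SI n s z = int (s (nat (z mod int n)))"
definition G1 :: "nat \<Rightarrow> (nat \<times> nat \<Rightarrow> nat \<times> nat) \<Rightarrow> int \<Rightarrow> int \<Rightarrow> int" where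
  "G1 n f z w = int (fst (f (nat (z mod int n), nat (w mod int n))))"
definition G2 :: "nat \<Rightarrow> (nat \<times> nat \<Rightarrow> nat \<times> nat) \<Rightarrow> int \<Rightarrow> int \<Rightarrow> int" where
  "G2 n f z w = int (snd (f (nat (z mod int n), nat (w mod int n))))"

lemma nat_mod_lt: "n > 0 \<Longrightarrow> nat (z mod int n) < n"
  by (simp add: nat_less_iff)

lemma key:
  assumes n: "n > 0" and s: "zn_seq n s" and t: "zn_seq n t"
    and hom: "\<forall>x\<in>Xset n. \<forall>y\<in>Xset n. f (lam n s x y) = lam n t (f x) (f y)"
    and into: "\<forall>x\<in>Xset n. f x \<in> Xset n"
  shows "G1 n f (k+j) (l - SI n s (k+j-i)) = (G1 n f k l + G2 n f i j) mod int n"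
    and "G2 n f (k+j) (l - SI n s (k+j-i)) =
          (G2 n f k l - SI n t (G1 n f k l + G2 n f i j - G1 n f i j)) mod int n"
proof -
  define i' where "i' = nat (i mod int n)"
  define j' where "j' = nat (j mod int n)"
  define k' where "k' = nat (k mod int n)"
  define l' where "l' = nat (l mod int n)"
  have lt: "i' < n" "j' < n" "k' < n" "l' < n" using n by (simp_all add: i'_def j'_def k'_def l'_def nat_mod_lt)
  have ii: "int i' = i mod int n" "int j' = j mod int n" "int k' = k mod int n" "int l' = l mod int n"
    using n by (simp_all add: i'_def j'_def k'_def l'_def)
  have X: "(i',j') \<in> Xset n" "(k',l') \<in> Xset n" using lt by (auto simp: Xset_def)
  have f1: "int (fst (lam n s (i',j') (k',l'))) = (k + j) mod int n"
    using lam_int(1)[OF n s lt] ii by (simp add: mod_add_eq)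
  have a1: "(int k' + int j' - int i') mod int n = (k + j - i) mod int n"
  proof -
    have "(int k' + int j' - int i') mod int n = ((k mod int n + j mod int n) - i mod int n) mod int n"
      using ii by simp
    also have "\<dots> = ((k mod int n + j mod int n) - i) mod int n" by (simp add: mod_diff_right_eq)
    also have "\<dots> = (((k mod int n + j mod int n) mod int n) - i) mod int n" by (simp add: mod_diff_left_eq)
    also have "\<dots> = ((k + j) mod int n - i) mod int n" by (simp add: mod_add_eq)
    also have "\<dots> = (k + j - i) mod int n" by (simp add: mod_diff_left_eq)
    finally show ?thesis .
  qed
  have f2: "int (snd (lam n s (i',j') (k',l'))) = (l - SI n s (k+j-i)) mod int n"
    using lam_int(2)[OF n s lt] ii a1 by (simp add: SI_def mod_diff_left_eq)
  have L: "lam n s (i',j') (k',l') = (nat ((k + j) mod int n), nat ((l - SI n s (k+j-i)) mod int n))"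
  proof -
    have "fst (lam n s (i',j') (k',l')) = nat ((k + j) mod int n)" using f1 by (simp flip: f1)
    moreover have "snd (lam n s (i',j') (k',l')) = nat ((l - SI n s (k+j-i)) mod int n)" using f2 by (simp flip: f2)
    ultimately show ?thesis by (simp add: prod_eq_iff)
  qed
  obtain A B where AB: "f (i',j') = (A,B)" by force
  obtain C D where CD: "f (k',l') = (C,D)" by force
  have ABl: "A < n" "B < n" proof -
    have "f (i',j') \<in> Xset n" using into X by blast
    then show "A < n" "B < n" using AB by (auto simp: Xset_def)
  qed
  have CDl: "C < n" "D < n" proof -
    have "f (k',l') \<in> Xset n" using into X by blast
    then show "C < n" "D < n" using CD by (auto simp: Xset_def)
  qed
  have gA: "G1 n f i j = int A" "G2 n f i j = int B" using AB by (simp_all add: G1_def G2_def i'_def j'_def)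
  have gC: "G1 n f k l = int C" "G2 n f k l = int D" using CD by (simp_all add: G1_def G2_def k'_def l'_def)
  have E: "f (nat ((k + j) mod int n), nat ((l - SI n s (k+j-i)) mod int n)) = lam n t (A,B) (C,D)"
  proof -
    have "f (lam n s (i',j') (k',l')) = lam n t (f (i',j')) (f (k',l'))" using hom X by blast
    then show ?thesis using L AB CD by simp
  qed
  have "G1 n f (k+j) (l - SI n s (k+j-i)) = int (fst (lam n t (A,B) (C,D)))"
    using E by (simp add: G1_def)
  also have "\<dots> = (G1 n f k l + G2 n f i j) mod int n"
    using lam_int(1)[OF n t ABl CDl] gA gC by simp
  finally show "G1 n f (k+j) (l - SI n s (k+j-i)) = (G1 n f k l + G2 n f i j) mod int n" .
  have "G2 n f (k+j) (l - SI n s (k+j-i)) = int (snd (lam n t (A,B) (C,D)))"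
    using E by (simp add: G2_def)
  also have "\<dots> = (G2 n f k l - SI n t (G1 n f k l + G2 n f i j - G1 n f i j)) mod int n"
    using lam_int(2)[OF n t ABl CDl] gA gC by (simp add: SI_def)
  finally show "G2 n f (k+j) (l - SI n s (k+j-i)) =
          (G2 n f k l - SI n t (G1 n f k l + G2 n f i j - G1 n f i j)) mod int n" .
qed



lemma mod_self_add_zero:
  fixes x D N :: int
  assumes "0 \<le> x" "x < N" "(x + D) mod N = x"
  shows "D mod N = 0"
proof -
  have N: "N > 0" using assms by linarith
  have "(x + D mod N) mod N = x" using assms(3) by (simp add: mod_add_right_eq)
  moreover have "0 \<le> D mod N" "D mod N < N" using N by simp_all
  ultimately show ?thesis using assms(1,2)
  proof -
    assume h: "(x + D mod N) mod N = x" "0 \<le> D mod N" "D mod N < N"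
    show ?thesis
    proof (cases "x + D mod N < N")
      case True
      then have "(x + D mod N) mod N = x + D mod N" using h assms(1) by (simp add: mod_pos_pos_trivial)
      then show ?thesis using h by simp
    next
      case False
      then have "(x + D mod N) mod N = x + D mod N - N"
      proof -
        have "(x + D mod N) mod N = (x + D mod N - N + N) mod N" by simp
        also have "\<dots> = (x + D mod N - N) mod N" by (rule mod_add_self2)
        also have "\<dots> = x + D mod N - N" using h assms False by (intro mod_pos_pos_trivial; linarith)
        finally show ?thesis .
      qed
      then show ?thesis using h by simp
    qed
  qed
qed

lemma sum_mod_cong:
  fixes x y :: "'a \<Rightarrow> int"
  assumes "\<And>k. k \<in> A \<Longrightarrow> x k mod N = y k mod N"
  shows "(\<Sum>k\<in>A. x k) mod N = (\<Sum>k\<in>A. y k) mod N"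
proof -
  have "(\<Sum>k\<in>A. x k) mod N = (\<Sum>k\<in>A. x k mod N) mod N" by (simp add: mod_sum_eq)
  also have "\<dots> = (\<Sum>k\<in>A. y k mod N) mod N" using assms by (simp cong: sum.cong)
  also have "\<dots> = (\<Sum>k\<in>A. y k) mod N" by (simp add: mod_sum_eq)
  finally show ?thesis .
qed

lemma mod0_between:
  fixes x n :: nat
  assumes x: "x mod n = 0" "x < 2 * n" "x > 0" shows "x = n"
proof -
  obtain q where q: "x = n * q" using x by (metis mod_0_imp_dvd dvdE)
  then have "q < 2" "q > 0" using x by auto
  then have "q = 1" by linarith
  then show "x = n" using q by simp
qed

lemma circ_surj:
  assumes n: "n > 0" and s: "zn_seq n s" and ns: "nonsingular n s" and c: "\<forall>k<n. c k < n"
  shows "\<exists>u. (\<forall>i<n. u i < n) \<and> (\<forall>k<n. (\<Sum>i<n. u i * s ((k + n - i) mod n)) mod n = c k)"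
proof -
  define V where "V = PiE {0..<n} (\<lambda>_. {0..<n})"
  define L where "L u = restrict (\<lambda>k. (\<Sum>i<n. u i * s ((k + n - i) mod n)) mod n) {0..<n}" for u
  have sub: "L ` V \<subseteq> V" using n by (auto simp: L_def V_def)
  have inj: "inj_on L V"
  proof (rule inj_onI)
    fix u u' assume uV: "u \<in> V" and u'V: "u' \<in> V" and Leq: "L u = L u'"
    have ul: "\<And>k. k < n \<Longrightarrow> u k < n" "\<And>k. k < n \<Longrightarrow> u' k < n" using uV u'V by (auto simp: V_def)
    define N where "N = int n"
    define w where "w i = (u i + n - u' i) mod n" for i
    have eqk: "(\<Sum>k<n. int (u k) * int (s ((l + n - k) mod n))) mod N =
               (\<Sum>k<n. int (u' k) * int (s ((l + n - k) mod n))) mod N" if "l < n" for l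
    proof -
      have "L u l = L u' l" using Leq by simp
      then have "(\<Sum>i<n. u i * s ((l + n - i) mod n)) mod n = (\<Sum>i<n. u' i * s ((l + n - i) mod n)) mod n"
        using that by (simp add: L_def)
      then have "int ((\<Sum>i<n. u i * s ((l + n - i) mod n)) mod n) = int ((\<Sum>i<n. u' i * s ((l + n - i) mod n)) mod n)"
        by simp
      then show ?thesis by (simp add: N_def zmod_int)
    qed
    have wint: "int (w k) mod N = (int (u k) - int (u' k)) mod N" if "k < n" for k
    proof -
      have "int (w k) = (int (u k) + N - int (u' k)) mod N"
        using ul(2)[OF that] by (simp add: w_def N_def zmod_int of_nat_diff)
      also have "\<dots> = (int (u k) - int (u' k) + N) mod N" by (simp add: algebra_simps)
      finally show ?thesis by simp
    qed
    have Z: "(\<Sum>k<n. int (w k) * int (s ((l + n - k) mod n))) mod N = 0" if "l < n" for l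
    proof -
      have "(\<Sum>k<n. int (w k) * int (s ((l + n - k) mod n))) mod N =
            (\<Sum>k<n. (int (u k) - int (u' k)) * int (s ((l + n - k) mod n))) mod N"
        by (rule sum_mod_cong) (metis lessThan_iff mod_mult_left_eq wint)
      also have "\<dots> = ((\<Sum>k<n. int (u k) * int (s ((l + n - k) mod n))) -
                        (\<Sum>k<n. int (u' k) * int (s ((l + n - k) mod n)))) mod N"
        by (simp add: left_diff_distrib sum_subtractf)
      also have "\<dots> = 0" using eqk[OF that] by (simp add: mod_eq_dvd_iff)
      finally show ?thesis .
    qed
    have zw: "znvec n w" using n by (simp add: znvec_def w_def)
    have bf0: "bform n s w v = 0" if "znvec n v" for v
    proof -
      have "int (bform n s w v) =
            (\<Sum>k<n. \<Sum>l<n. int (w k) * int (v l) * int (s ((l + n - k) mod n))) mod N"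
        by (simp add: bform_def N_def zmod_int)
      also have "\<dots> = (\<Sum>l<n. int (v l) * (\<Sum>k<n. int (w k) * int (s ((l + n - k) mod n)))) mod N"
      proof -
        have "(\<Sum>k<n. \<Sum>l<n. int (w k) * int (v l) * int (s ((l + n - k) mod n))) =
              (\<Sum>l<n. \<Sum>k<n. int (w k) * int (v l) * int (s ((l + n - k) mod n)))"
          by (rule sum.swap)
        also have "\<dots> = (\<Sum>l<n. int (v l) * (\<Sum>k<n. int (w k) * int (s ((l + n - k) mod n))))"
          unfolding sum_distrib_left by (intro sum.cong refl) (simp only: mult.commute mult.left_commute)
        finally show ?thesis by simp
      qed
      also have "\<dots> = (\<Sum>l<n. 0) mod N"
        by (rule sum_mod_cong) (subst mod_mult_right_eq[symmetric], simp add: Z)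
      finally show ?thesis by simp
    qed
    have w0: "\<forall>k<n. w k = 0" using ns zw bf0 unfolding nonsingular_def by blast
    have "u k = u' k" if "k < n" for k
    proof -
      have "(u k + n - u' k) mod n = 0" using w0 that by (simp add: w_def)
      moreover have "u k + n - u' k < 2 * n" "u k + n - u' k > 0" using ul(1)[OF that] ul(2)[OF that] by linarith+
      ultimately have "u k + n - u' k = n"
        by (rule mod0_between)
      then show ?thesis using ul that by linarith
    qed
    then show "u = u'" using uV u'V unfolding V_def by (intro PiE_ext) auto
  qed
  have "L ` V = V" using endo_inj_surj[OF _ sub inj] by (simp add: V_def finite_PiE)
  moreover have "restrict c {0..<n} \<in> V" using c by (auto simp: V_def)
  ultimately obtain u where u: "u \<in> V" "L u = restrict c {0..<n}" by (metis imageE)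
  show ?thesis
  proof (intro exI conjI allI impI)
    fix i assume "i < n" then show "u i < n" using u by (auto simp: V_def)
  next
    fix k assume "k < n"
    then show "(\<Sum>i<n. u i * s ((k + n - i) mod n)) mod n = c k"
      using fun_cong[OF u(2), of k] by (simp add: L_def)
  qed
qed



lemma mod3: "((x::int) mod N + y mod N - z) mod N = (x + y - z) mod N"
proof -
  have "(x mod N + y mod N - z) mod N = ((x mod N + y mod N) mod N - z) mod N" by (simp add: mod_diff_left_eq)
  also have "\<dots> = ((x + y) mod N - z) mod N" by (simp add: mod_add_eq)
  also have "\<dots> = (x + y - z) mod N" by (simp add: mod_diff_left_eq)
  finally show ?thesis .
qed

lemma forward:
  assumes n: "n > 0" and s: "zn_seq n s" and t: "zn_seq n t"
    and u: "zn_unit n a" and sc: "scaled n a s t"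
  shows "sol_iso n s t"
proof -
  obtain b where b: "b < n" "(a * b) mod n = 1" and al: "a < n" using u by (auto simp: zn_unit_def)
  define f where "f = (\<lambda>(i::nat, j::nat). ((a * i) mod n, (a * j) mod n))"
  define g where "g = (\<lambda>(i::nat, j::nat). ((b * i) mod n, (b * j) mod n))"
  have inv1: "(b * ((a * i) mod n)) mod n = i" if "i < n" for i
  proof -
    have "(b * ((a * i) mod n)) mod n = ((a * b) * i) mod n" by (simp add: mod_mult_right_eq ac_simps)
    also have "\<dots> = (((a * b) mod n) * i) mod n" by (simp add: mod_mult_left_eq)
    also have "\<dots> = i" using b that by simp
    finally show ?thesis .
  qed
  have inv2: "(a * ((b * i) mod n)) mod n = i" if "i < n" for i
  proof -
    have "(a * ((b * i) mod n)) mod n = ((a * b) * i) mod n" by (simp add: mod_mult_right_eq ac_simps)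
    also have "\<dots> = (((a * b) mod n) * i) mod n" by (simp add: mod_mult_left_eq)
    also have "\<dots> = i" using b that by simp
    finally show ?thesis .
  qed
  have bij: "bij_betw f (Xset n) (Xset n)"
    by (rule bij_betw_byWitness[where f' = g])
       (use n inv1 inv2 in \<open>auto simp: f_def g_def Xset_def\<close>)
  have hom: "f (lam n s x y) = lam n t (f x) (f y)" if x: "x \<in> Xset n" and y: "y \<in> Xset n" for x y
  proof -
    obtain i j where ij: "x = (i, j)" by force
    obtain k l where kl: "y = (k, l)" by force
    have lt: "i < n" "j < n" "k < n" "l < n" using x y ij kl by (auto simp: Xset_def)
    have lt2: "(a*i) mod n < n" "(a*j) mod n < n" "(a*k) mod n < n" "(a*l) mod n < n" using n by simp_all
    obtain P Q where PQ: "lam n s (i,j) (k,l) = (P, Q)" by force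
    have P: "int P = (int k + int j) mod int n" using lam_int(1)[OF n s lt] PQ by simp
    define m where "m = nat ((int k + int j - int i) mod int n)"
    have m: "m < n" "int m = (int k + int j - int i) mod int n" using n by (simp_all add: m_def nat_mod_lt)
    have Q: "int Q = (int l - int (s m)) mod int n" using lam_int(2)[OF n s lt] PQ by (simp add: m_def)
    have scm: "int (t ((a * m) mod n)) = (int a * int (s m)) mod int n"
      using sc m(1) unfolding scaled_def by (metis of_nat_mult zmod_int)
    have am: "(int ((a*k) mod n) + int ((a*j) mod n) - int ((a*i) mod n)) mod int n = int ((a * m) mod n)"
    proof -
      have "(int ((a*k) mod n) + int ((a*j) mod n) - int ((a*i) mod n)) mod int n
            = (int a * int k + int a * int j - int a * int i) mod int n"
        by (simp add: zmod_int mod3 mod_diff_right_eq)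
      also have "\<dots> = (int a * ((int k + int j - int i) mod int n)) mod int n"
        by (simp add: mod_mult_right_eq algebra_simps)
      also have "\<dots> = int ((a * m) mod n)" using m(2) by (simp add: zmod_int)
      finally show ?thesis .
    qed
    have R1: "int (fst (lam n t ((a*i) mod n, (a*j) mod n) ((a*k) mod n, (a*l) mod n))) =
              (int a * int k + int a * int j) mod int n"
      using lam_int(1)[OF n t lt2] by (simp add: zmod_int mod_simps)
    have R2: "int (snd (lam n t ((a*i) mod n, (a*j) mod n) ((a*k) mod n, (a*l) mod n))) =
              (int a * int l - int a * int (s m)) mod int n"
    proof -
      have "int (snd (lam n t ((a*i) mod n, (a*j) mod n) ((a*k) mod n, (a*l) mod n))) =
            (int ((a*l) mod n) - int (t ((a * m) mod n))) mod int n"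
        using lam_int(2)[OF n t lt2] am by simp
      also have "\<dots> = (int a * int l - int a * int (s m)) mod int n"
        using scm by (simp add: zmod_int mod_simps)
      finally show ?thesis .
    qed
    have L1: "int ((a * P) mod n) = (int a * int k + int a * int j) mod int n"
      using P by (simp add: zmod_int mod_simps algebra_simps)
    have L2: "int ((a * Q) mod n) = (int a * int l - int a * int (s m)) mod int n"
      using Q by (simp add: zmod_int mod_simps algebra_simps)
    have "f (lam n s x y) = ((a * P) mod n, (a * Q) mod n)" using ij kl PQ by (simp add: f_def)
    also have "\<dots> = lam n t ((a*i) mod n, (a*j) mod n) ((a*k) mod n, (a*l) mod n)"
      using L1 L2 R1 R2 by (metis of_nat_eq_iff prod.collapse)
    also have "\<dots> = lam n t (f x) (f y)" using ij kl by (simp add: f_def)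
    finally show ?thesis .
  qed
  show ?thesis unfolding sol_iso_def using bij hom by blast
qed



lemma converse:
  assumes n1: "n > 1" and s: "zn_seq n s" and t: "zn_seq n t" and ns: "nonsingular n s"
    and bij: "bij_betw f (Xset n) (Xset n)"
    and hom: "\<forall>x\<in>Xset n. \<forall>y\<in>Xset n. f (lam n s x y) = lam n t (f x) (f y)"
  shows "\<exists>a. zn_unit n a \<and> scaled n a s t"
proof -
  have n: "n > 0" using n1 by simp
  have into: "\<forall>x\<in>Xset n. f x \<in> Xset n" using bij by (simp add: bij_betw_apply)
  define N where "N = int n"
  have N: "N > 1" using n1 by (simp add: N_def)
  define g1 where "g1 = G1 n f"
  define g2 where "g2 = G2 n f"
  define S where "S = SI n s"
  define T where "T = SI n t"
  have K1: "g1 (k+j) (l - S (k+j-i)) = (g1 k l + g2 i j) mod N" for i j k l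
    using key(1)[OF n s t hom into] by (simp add: g1_def g2_def S_def N_def)
  have K2: "g2 (k+j) (l - S (k+j-i)) = (g2 k l - T (g1 k l + g2 i j - g1 i j)) mod N" for i j k l
    using key(2)[OF n s t hom into] by (simp add: g1_def g2_def S_def T_def N_def)
  have per1: "g1 z w = g1 z' w'" if "z mod N = z' mod N" "w mod N = w' mod N" for z w z' w'
    using that by (simp add: g1_def G1_def N_def)
  have per2: "g2 z w = g2 z' w'" if "z mod N = z' mod N" "w mod N = w' mod N" for z w z' w'
    using that by (simp add: g2_def G2_def N_def)
  have perT: "T z = T z'" if "z mod N = z' mod N" for z z'
    using that by (simp add: T_def SI_def N_def)
  have inX: "(nat (z mod int n), nat (w mod int n)) \<in> Xset n" for z w
    using n by (simp add: Xset_def nat_mod_lt)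
  have rng1: "0 \<le> g1 z w \<and> g1 z w < N" for z w
  proof -
    have "f (nat (z mod int n), nat (w mod int n)) \<in> Xset n" using into inX[of z w] by blast
    then show ?thesis by (auto simp: g1_def G1_def N_def Xset_def)
  qed
  have rng2: "0 \<le> g2 z w \<and> g2 z w < N" for z w
  proof -
    have "f (nat (z mod int n), nat (w mod int n)) \<in> Xset n" using into inX[of z w] by blast
    then show ?thesis by (auto simp: g2_def G2_def N_def Xset_def)
  qed
  have rngT: "0 \<le> T z \<and> T z < N" for z
    using t n by (simp add: T_def SI_def N_def zn_seq_def nat_mod_lt)
  have g1mod: "g1 z w mod N = g1 z w" for z w using rng1[of z w] by simp
  have g2mod: "g2 z w mod N = g2 z w" for z w using rng2[of z w] by simp
  have St1: "g1 k (l - S (k - i)) = (g1 k l + g2 i 0) mod N" for k l i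
    using K1[of k 0 l i] by simp
  have St2: "g1 k (l - int m * S (k - i)) = (g1 k l + int m * g2 i 0) mod N" for m k l i
  proof (induction m arbitrary: l)
    case 0 then show ?case using g1mod by simp
  next
    case (Suc m)
    have eq: "l - int (Suc m) * S (k-i) = (l - int m * S (k - i)) - S (k - i)" by (simp add: algebra_simps)
    have "g1 k (l - int (Suc m) * S (k-i)) = (g1 k (l - int m * S(k-i)) + g2 i 0) mod N"
      unfolding eq by (rule St1)
    also have "\<dots> = ((g1 k l + int m * g2 i 0) mod N + g2 i 0) mod N" using Suc.IH by simp
    also have "\<dots> = (g1 k l + int m * g2 i 0 + g2 i 0) mod N" by (simp add: mod_add_left_eq)
    also have "g1 k l + int m * g2 i 0 + g2 i 0 = g1 k l + int (Suc m) * g2 i 0" by (simp add: algebra_simps)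
    finally show ?case .
  qed
  have St3: "g1 k (l - (\<Sum>i\<in>I. int (u i) * S (k - int i))) = (g1 k l + (\<Sum>i\<in>I. int (u i) * g2 (int i) 0)) mod N"
    if "finite I" for I u k l
    using that
  proof (induction I arbitrary: l rule: finite_induct)
    case empty then show ?case using g1mod by simp
  next
    case (insert x F)
    define b where "b = (\<Sum>i\<in>F. int (u i) * S (k - int i))"
    define e where "e = (\<Sum>i\<in>F. int (u i) * g2 (int i) 0)"
    have "g1 k (l - (\<Sum>i\<in>insert x F. int (u i) * S (k - int i))) = g1 k ((l - b) - int (u x) * S (k - int x))"
      using insert by (simp add: b_def algebra_simps)
    also have "\<dots> = (g1 k (l - b) + int (u x) * g2 (int x) 0) mod N" by (rule St2)
    also have "\<dots> = ((g1 k l + e) mod N + int (u x) * g2 (int x) 0) mod N" using insert.IH by (simp add: b_def e_def)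
    also have "\<dots> = (g1 k l + (e + int (u x) * g2 (int x) 0)) mod N" by (simp add: mod_add_left_eq algebra_simps)
    also have "e + int (u x) * g2 (int x) 0 = (\<Sum>i\<in>insert x F. int (u i) * g2 (int i) 0)"
      using insert by (simp add: e_def)
    finally show ?case .
  qed
  have St5: "g1 (int k0) (l - 1) = g1 (int k0) l" if k0: "k0 < n" for k0 l
  proof -
    define c where "c k = (if k = k0 then 1 else (0::nat))" for k
    have cl: "\<forall>k<n. c k < n" using n1 by (simp add: c_def)
    obtain u where u: "\<forall>i<n. u i < n" "\<forall>k<n. (\<Sum>i<n. u i * s ((k + n - i) mod n)) mod n = c k"
      using circ_surj[OF n s ns cl] by blast
    define D where "D = (\<Sum>i\<in>{..<n}. int (u i) * g2 (int i) 0)"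
    have ck: "g1 (int k) (l - int (c k)) = (g1 (int k) l + D) mod N" if "k < n" for k l
    proof -
      have Sk: "S (int k - int i) = int (s ((k + n - i) mod n))" if "i < n" for i
      proof -
        have "(int k - int i) mod N = int ((k + n - i) mod n)"
        proof -
          have "int ((k + n - i) mod n) = (int k + N - int i) mod N"
            using that by (simp add: N_def zmod_int of_nat_diff)
          also have "\<dots> = (int k - int i + N) mod N" by (simp add: algebra_simps)
          finally show ?thesis by simp
        qed
        then show ?thesis by (simp add: S_def SI_def N_def)
      qed
      have sm: "(\<Sum>i<n. int (u i) * S (int k - int i)) = int (\<Sum>i<n. u i * s ((k + n - i) mod n))"
        using Sk by simp
      have "int (c k) = int ((\<Sum>i<n. u i * s ((k + n - i) mod n)) mod n)" using u(2) that by simp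
      also have "\<dots> = int (\<Sum>i<n. u i * s ((k + n - i) mod n)) mod N" by (simp only: N_def zmod_int)
      finally have "int (c k) = (\<Sum>i<n. int (u i) * S (int k - int i)) mod N" using sm by simp
      then have "(l - int (c k)) mod N = (l - (\<Sum>i<n. int (u i) * S (int k - int i))) mod N"
        by (simp add: mod_diff_right_eq)
      then have "g1 (int k) (l - int (c k)) = g1 (int k) (l - (\<Sum>i<n. int (u i) * S (int k - int i)))"
        by (intro per1) simp_all
      also have "\<dots> = (g1 (int k) l + D) mod N" unfolding D_def by (rule St3) simp
      finally show ?thesis .
    qed
    define k1 where "k1 = (k0 + 1) mod n"
    have k1: "k1 < n" "k1 \<noteq> k0"
    proof -
      show "k1 < n" using n by (simp add: k1_def)
      show "k1 \<noteq> k0"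
      proof (cases "k0 + 1 < n")
        case True then show ?thesis by (simp add: k1_def)
      next
        case False
        then have "k0 + 1 = n" using k0 by linarith
        then have "k1 = 0" by (simp add: k1_def)
        then show ?thesis using \<open>k0 + 1 = n\<close> n1 by linarith
      qed
    qed
    have "g1 (int k1) l = (g1 (int k1) l + D) mod N" using ck[OF k1(1), of l] k1 by (simp add: c_def)
    then have D0: "D mod N = 0" using rng1 by (intro mod_self_add_zero[of "g1 (int k1) l"]) auto
    have "g1 (int k0) (l - 1) = (g1 (int k0) l + D) mod N" using ck[OF k0, of l] by (simp add: c_def)
    also have "\<dots> = (g1 (int k0) l + D mod N) mod N" by (simp add: mod_add_right_eq)
    also have "\<dots> = g1 (int k0) l" using D0 g1mod by simp
    finally show ?thesis .
  qed
  have St6: "g1 k l = g1 k 0" for k l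
  proof -
    define k0 where "k0 = nat (k mod N)"
    have k0: "k0 < n" "int k0 mod N = k mod N" using n by (simp_all add: k0_def N_def nat_mod_lt)
    have neg: "g1 (int k0) (- int m) = g1 (int k0) 0" for m
    proof (induction m)
      case 0 then show ?case by simp
    next
      case (Suc m)
      have "g1 (int k0) (- int (Suc m)) = g1 (int k0) (- int m - 1)" by (rule arg_cong[where f="g1 (int k0)"]) simp
      also have "\<dots> = g1 (int k0) (- int m)" by (rule St5[OF k0(1)])
      finally show ?case using Suc by simp
    qed
    define m where "m = nat ((- l) mod N)"
    have "int m = (- l) mod N" using N by (simp add: m_def)
    then have ml: "(- int m) mod N = l mod N" by (simp add: mod_minus_eq)
    have "g1 k l = g1 (int k0) (- int m)" using k0 ml by (intro per1) simp_all
    also have "\<dots> = g1 (int k0) 0" by (rule neg)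
    also have "\<dots> = g1 k 0" using k0 by (intro per1) simp_all
    finally show ?thesis .
  qed
  define gg where "gg k = g1 k 0" for k
  have St7: "gg (k + j) = (gg k + g2 i j) mod N" for i j k
    using K1[of k j 0 i] St6[of "k+j" "0 - S (k+j-i)"] unfolding gg_def by simp
  define h where "h j = (gg j - gg 0) mod N" for j
  have hg2: "g2 i j = h j" for i j
  proof -
    have "h j = ((gg 0 + g2 i j) mod N - gg 0) mod N" using St7[of 0 j i] by (simp add: h_def)
    also have "\<dots> = g2 i j mod N" by (simp add: mod_diff_left_eq)
    finally show ?thesis using g2mod by simp
  qed
  have hadd: "h (k + j) = (h k + h j) mod N" for k j
  proof -
    have "h (k + j) = ((gg k + h j) mod N - gg 0) mod N" using St7[of k j 0] hg2 by (simp add: h_def)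
    also have "\<dots> = ((gg k - gg 0) + h j) mod N" by (simp add: mod_diff_left_eq algebra_simps)
    also have "\<dots> = (h k + h j) mod N" by (simp add: h_def mod_add_left_eq)
    finally show ?thesis .
  qed
  have hper: "h z = h z'" if "z mod N = z' mod N" for z z'
    using per1[OF that, of 0 0] by (simp add: h_def gg_def)
  have hmod: "h z mod N = h z" for z by (simp add: h_def)
  have hnat: "h (int m) = (int m * h 1) mod N" for m
  proof (induction m)
    case 0 then show ?case by (simp add: h_def)
  next
    case (Suc m)
    have "h (int (Suc m)) = (h (int m) + h 1) mod N" using hadd[of "int m" 1] by (simp add: add.commute)
    also have "\<dots> = ((int m * h 1) mod N + h 1) mod N" using Suc by simp
    also have "\<dots> = (int (Suc m) * h 1) mod N" by (simp add: mod_add_left_eq mod_add_right_eq algebra_simps)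
    finally show ?case .
  qed
  have hlin: "h z = (z * h 1) mod N" for z
  proof -
    define m where "m = nat (z mod N)"
    have zm: "int m = z mod N" using N by (simp add: m_def)
    have "h z = h (int m)" using zm by (intro hper) simp
    also have "\<dots> = ((z mod N) * h 1) mod N" using hnat[of m] zm by simp
    also have "\<dots> = (z * h 1) mod N" by (simp add: mod_mult_left_eq)
    finally show ?thesis .
  qed
  define A where "A = h 1"
  have A: "0 \<le> A" "A < N" using N by (simp_all add: A_def h_def)
  define a where "a = nat A"
  have aA: "int a = A" using A by (simp add: a_def)
  have St8: "(S k * A) mod N = T (h k)" for k
  proof -
    have "g2 k (0 - S k) = (g2 k 0 - T (g1 k 0 + g2 0 0 - g1 0 0)) mod N"
      using K2[of k 0 0 0] by simp
    then have "h (- S k) = (h 0 - T (gg k + h 0 - gg 0)) mod N" using hg2 by (simp add: gg_def)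
    also have "\<dots> = (- T (h k)) mod N"
    proof -
      have "h 0 = 0" by (simp add: h_def)
      moreover have "T (gg k - gg 0) = T (h k)" by (intro perT) (simp add: h_def)
      ultimately show ?thesis by simp
    qed
    finally have "(- (S k * A)) mod N = (- T (h k)) mod N" using hlin[of "- S k"] by (simp add: A_def)
    then have "(S k * A) mod N = T (h k) mod N"
      by (metis mod_minus_cong minus_minus)
    then show ?thesis using rngT[of "h k"] by simp
  qed
  have scal: "scaled n a s t"
    unfolding scaled_def
  proof (intro allI impI)
    fix k assume k: "k < n"
    have Sk: "S (int k) = int (s k)" using k by (simp add: S_def SI_def)
    have Th: "T (h (int k)) = int (t ((a * k) mod n))"
    proof -
      have "h (int k) = int ((a * k) mod n)" using hlin[of "int k"] aA A_def[symmetric] by (simp add: N_def zmod_int algebra_simps)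
      moreover have "nat (int ((a * k) mod n) mod int n) = (a * k) mod n"
        by (metis mod_mod_trivial nat_int zmod_int)
      ultimately show ?thesis by (simp only: T_def SI_def N_def)
    qed
    have "int ((a * s k) mod n) = (S (int k) * A) mod N" using Sk aA by (simp add: N_def zmod_int algebra_simps)
    also have "\<dots> = int (t ((a * k) mod n))" using St8 Th by simp
    finally show "(a * s k) mod n = t ((a * k) mod n)" by simp
  qed
  have "(0, 1) \<in> Xset n" using n1 by (simp add: Xset_def)
  then obtain x where x: "x \<in> Xset n" "f x = (0, 1)" using bij unfolding bij_betw_def by (metis imageE)
  obtain i j where ij: "x = (i, j)" by force
  have ijl: "i < n" "j < n" using x ij by (auto simp: Xset_def)
  have "g2 (int i) (int j) = 1" using x ij ijl by (simp add: g2_def G2_def)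
  then have "h (int j) = 1" using hg2 by simp
  then have "(int j * A) mod N = 1" using hlin[of "int j"] by (simp add: A_def)
  then have "int ((a * j) mod n) = 1" using aA by (simp add: N_def zmod_int algebra_simps)
  then have aj: "(a * j) mod n = 1" by simp
  have "a < n" using A aA by (simp add: N_def)
  then have "zn_unit n a" using aj ijl by (auto simp: zn_unit_def)
  then show ?thesis using scal by blast
qed


theorem mainTheorem15:
  fixes n :: nat and as cs :: "nat \<Rightarrow> nat"
  assumes "n > 1"
    and "zn_seq n as" and "zn_seq n cs"
    and "sym_seq n as" and "sym_seq n cs"
  shows "((\<exists>a. zn_unit n a \<and> scaled n a as cs) \<longrightarrow> sol_iso n as cs)
       \<and> (nonsingular n as \<and> nonsingular n cs \<and> sol_iso n as cs
            \<longrightarrow> (\<exists>a. zn_unit n a \<and> scaled n a as cs))"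
proof (intro conjI impI)
  have n: "n > 0" using assms(1) by simp
  assume "\<exists>a. zn_unit n a \<and> scaled n a as cs"
  then obtain a where "zn_unit n a" "scaled n a as cs" by blast
  then show "sol_iso n as cs" using forward[OF n assms(2,3)] by blast
next
  assume h: "nonsingular n as \<and> nonsingular n cs \<and> sol_iso n as cs"
  then obtain f where f: "bij_betw f (Xset n) (Xset n)"
    "\<forall>x\<in>Xset n. \<forall>y\<in>Xset n. f (lam n as x y) = lam n cs (f x) (f y)"
    unfolding sol_iso_def by blast
  show "\<exists>a. zn_unit n a \<and> scaled n a as cs"
    using converse[OF assms(1,2,3) _ f] h by blast
qed

end
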